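(* Under the hypotheses of the preceding limit theorem (iid $X_i$ with continuous $F\in\mathcal{D}(G)$, norming constants $a_n,b_n$, $j(n)/n\to\lambda_1>0$, $k(n)/n\to\lambda_2>\lambda_1$, $\beta_i=\lambda_i/(\lambda_2-\lambda_1)$), for all real $u<y$ with $G(u)<1$, \[ \lim_{n\to\infty}\Pr\left(\frac{X_k-b_n}{a_n}\le y\ \Big|\ \frac{X_j-b_n}{a_n}>u,\ X_j\text{ and }X_k\text{ are records}\right) =\frac{G(y)^{\lambda_2}-G(u)^{\lambda_1}\left(\beta_2G(y)^{\lambda_2-\lambda_1}-\beta_1G(u)^{\lambda_2-\lambda_1}\right)}{\beta_2\left(1-G(u)^{\lambda_1}\right)-\beta_1\left(1-G(u)^{\lambda_2}\right)}. \]
   Context: $X_m$ is a record if $X_m>\max(X_1,\dots,X_{m-1})$; $X_1$ is always a record. $F\in\mathcal{D}(G)$ means $F^n(a_nx+b_n)\to G(x)$ for all $x$, with $G$ a non-degenerate extreme value distribution function. *)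

theory Defs
  imports "HOL-Probability.Probability"
begin

definition gev_std :: "real \<Rightarrow> real \<Rightarrow> real" where
  "gev_std \<gamma> x =
     (if \<gamma> = 0 then exp (- exp (- x))
      else if 1 + \<gamma> * x > 0 then exp (- ((1 + \<gamma> * x) powr (- 1 / \<gamma>)))
      else if \<gamma> > 0 then 0 else 1)"

definition is_ev_df :: "(real \<Rightarrow> real) \<Rightarrow> bool" where
  "is_ev_df G \<longleftrightarrow> (\<exists>\<gamma> \<mu> \<sigma>. \<sigma> > 0 \<and> (\<forall>x. G x = gev_std \<gamma> ((x - \<mu>) / \<sigma>)))"

definition in_doa :: "(real \<Rightarrow> real) \<Rightarrow> (real \<Rightarrow> real) \<Rightarrow> (nat \<Rightarrow> real) \<Rightarrow> (nat \<Rightarrow> real) \<Rightarrow> bool" where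
  "in_doa F G a b \<longleftrightarrow> is_ev_df G \<and> (\<forall>n. a n > 0) \<and>
     (\<forall>x. (\<lambda>n. F (a n * x + b n) ^ n) \<longlonglongrightarrow> G x)"

text \<open>X_m (indices start at 1) is a record: X_m > max(X_1,...,X_{m-1}); X_1 always is.\<close>
definition is_record :: "(nat \<Rightarrow> 'a \<Rightarrow> real) \<Rightarrow> nat \<Rightarrow> 'a \<Rightarrow> bool" where
  "is_record X m \<omega> \<longleftrightarrow> (\<forall>i\<in>{1..<m}. X i \<omega> < X m \<omega>)"

end

theory Submission
  imports Defs
begin


lemma pow_limit:
  fixes x :: "nat \<Rightarrow> real" and m :: "nat \<Rightarrow> nat"
  assumes x0: "\<And>n. 0 \<le> x n" and xn: "(\<lambda>n. x n ^ n) \<longlonglongrightarrow> g"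
    and mn: "(\<lambda>n. real (m n) / real n) \<longlonglongrightarrow> l" and l: "l > 0"
  shows "(\<lambda>n. x n ^ m n) \<longlonglongrightarrow> g powr l"
proof -
  have ev: "eventually (\<lambda>n. real (m n) / real n > 0) sequentially"
    using mn l by (simp add: order_tendsto_iff)
  have "eventually (\<lambda>n. (x n ^ n) powr (real (m n) / real n) = x n ^ m n) sequentially"
    using ev eventually_gt_at_top[of 0]
  proof eventually_elim
    case (elim n)
    then have mpos: "m n > 0" using zero_less_divide_iff by fastforce
    show ?case
    proof (cases "x n = 0")
      case True then show ?thesis using mpos elim by (simp add: zero_power)
    next
      case False
      then have xp: "x n > 0" using x0[of n] by simp
      have "(x n ^ n) powr (real (m n) / real n) = (x n powr real n) powr (real (m n) / real n)"
        using xp by (simp add: powr_realpow)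
      also have "\<dots> = x n powr (real (m n))" using elim by (simp add: powr_powr)
      also have "\<dots> = x n ^ m n" using xp by (simp add: powr_realpow)
      finally show ?thesis .
    qed
  qed
  moreover have "(\<lambda>n. (x n ^ n) powr (real (m n) / real n)) \<longlonglongrightarrow> g powr l"
    by (rule tendsto_powr'[OF xn mn]) (use l x0 in auto)
  ultimately show ?thesis by (rule Lim_transform_eventually[rotated])
qed

lemma psi_pos:
  fixes \<theta> s :: real
  assumes "0 < \<theta>" "\<theta> < 1" "0 < s"
  shows "\<theta> * (1 - exp (- s)) < 1 - exp (- \<theta> * s)"
proof -
  define \<psi> where "\<psi> = (\<lambda>x::real. 1 - exp (- \<theta> * x) - \<theta> + \<theta> * exp (- x))"
  have d: "DERIV \<psi> x :> \<theta> * exp (- \<theta> * x) - \<theta> * exp (- x)" for x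
    unfolding \<psi>_def by (auto intro!: derivative_eq_intros)
  obtain z where z: "0 < z" "z < s" "\<psi> s - \<psi> 0 = (s - 0) * (\<theta> * exp (- \<theta> * z) - \<theta> * exp (- z))"
    using MVT2[OF assms(3) d] by blast
  have "exp (- z) < exp (- \<theta> * z)" using z assms by simp
  then have "\<theta> * exp (- \<theta> * z) - \<theta> * exp (- z) > 0" using assms by simp
  then have "\<psi> s - \<psi> 0 > 0" using z assms by simp
  then show ?thesis unfolding \<psi>_def by (simp add: algebra_simps)
qed

definition Nf :: "real \<Rightarrow> real \<Rightarrow> nat \<Rightarrow> nat \<Rightarrow> real" where
  "Nf p r j k = (1 / real j) * ((r ^ k - p ^ k) / real k - p ^ j * (r ^ (k - j) - p ^ (k - j)) / real (k - j))"

lemma ratio_inv_limit: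
  assumes "(\<lambda>n. real (m n) / real n) \<longlonglongrightarrow> l" "l > 0"
  shows "(\<lambda>n. real n / real (m n)) \<longlonglongrightarrow> 1 / l"
proof -
  have "(\<lambda>n. inverse (real (m n) / real n)) \<longlonglongrightarrow> inverse l"
    using assms by (intro tendsto_inverse) auto
  then show ?thesis by (simp add: inverse_eq_divide)
qed

lemma Nf_limit:
  fixes p q :: "nat \<Rightarrow> real" and j k :: "nat \<Rightarrow> nat"
  assumes p0: "\<And>n. 0 \<le> p n" and q0: "\<And>n. 0 \<le> q n"
    and pn: "(\<lambda>n. p n ^ n) \<longlonglongrightarrow> P" and qn: "(\<lambda>n. q n ^ n) \<longlonglongrightarrow> Q"
    and jn: "(\<lambda>n. real (j n) / real n) \<longlonglongrightarrow> l1" and l1: "l1 > 0"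
    and kn: "(\<lambda>n. real (k n) / real n) \<longlonglongrightarrow> l2" and l12: "l2 > l1"
  shows "(\<lambda>n. real n ^ 2 * Nf (p n) (q n) (j n) (k n)) \<longlonglongrightarrow>
     (Q powr l2 - P powr l2) / (l1 * l2) - P powr l1 * (Q powr (l2 - l1) - P powr (l2 - l1)) / (l1 * (l2 - l1))"
proof -
  have l2: "l2 > 0" using l1 l12 by simp
  have d: "(\<lambda>n. real (k n) / real n - real (j n) / real n) \<longlonglongrightarrow> l2 - l1"
    using kn jn by (rule tendsto_diff)
  then have "eventually (\<lambda>n. real (k n) / real n - real (j n) / real n > 0) sequentially"
    using l12 order_tendstoD(1)[OF d, of 0] by simp
  then have evjk: "eventually (\<lambda>n. j n < k n) sequentially"
    by eventually_elim (simp add: diff_divide_distrib[symmetric] divide_less_cancel zero_less_divide_iff)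
  have kj: "(\<lambda>n. real (k n - j n) / real n) \<longlonglongrightarrow> l2 - l1"
  proof (rule Lim_transform_eventually[OF d])
    show "eventually (\<lambda>n. real (k n) / real n - real (j n) / real n = real (k n - j n) / real n) sequentially"
      using evjk by eventually_elim (simp add: of_nat_diff diff_divide_distrib)
  qed
  have evj: "eventually (\<lambda>n. j n > 0) sequentially"
  proof -
    have "eventually (\<lambda>n. real (j n) / real n > 0) sequentially"
      using jn l1 by (simp add: order_tendsto_iff)
    then show ?thesis by eventually_elim (auto simp: zero_less_divide_iff)
  qed
  have lim: "(\<lambda>n. (real n / real (j n)) * (real n / real (k n)) * (q n ^ k n - p n ^ k n)
        - (real n / real (j n)) * (real n / real (k n - j n)) * (p n ^ j n * (q n ^ (k n - j n) - p n ^ (k n - j n))))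
      \<longlonglongrightarrow> (1 / l1) * (1 / l2) * (Q powr l2 - P powr l2) - (1 / l1) * (1 / (l2 - l1)) * (P powr l1 * (Q powr (l2 - l1) - P powr (l2 - l1)))"
    by (intro tendsto_intros ratio_inv_limit pow_limit[OF q0 qn] pow_limit[OF p0 pn] jn kn kj l1 l2)
       (use l12 in auto)
  have "eventually (\<lambda>n. (real n / real (j n)) * (real n / real (k n)) * (q n ^ k n - p n ^ k n)
        - (real n / real (j n)) * (real n / real (k n - j n)) * (p n ^ j n * (q n ^ (k n - j n) - p n ^ (k n - j n)))
       = real n ^ 2 * Nf (p n) (q n) (j n) (k n)) sequentially"
    using evj evjk by eventually_elim (simp add: Nf_def field_simps power2_eq_square)
  from Lim_transform_eventually[OF lim this]
  show ?thesis using l1 l2 l12 by (simp add: field_simps)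
qed

lemma LD_pos:
  fixes P l1 l2 :: real
  assumes P0: "0 \<le> P" and P1: "P < 1" and l1: "0 < l1" and l12: "l1 < l2"
  shows "(1 powr l2 - P powr l2) / (l1 * l2) - P powr l1 * (1 powr (l2 - l1) - P powr (l2 - l1)) / (l1 * (l2 - l1)) > 0"
proof -
  have l2: "l2 > 0" using l1 l12 by simp
  have pa: "P powr l1 * P powr (l2 - l1) = P powr l2" by (simp add: powr_add[symmetric])
  have key: "l1 * (1 - P powr l2) < l2 * (1 - P powr l1)"
  proof (cases "P = 0")
    case True then show ?thesis using l12 l1 by simp
  next
    case False
    then have Pp: "P > 0" using P0 by simp
    have s: "0 < - l2 * ln P" using Pp P1 l2 by (simp add: mult_pos_neg ln_less_zero)
    have "(l1 / l2) * (1 - exp (- (- l2 * ln P))) < 1 - exp (- (l1 / l2) * (- l2 * ln P))"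
      by (rule psi_pos) (use l1 l12 l2 s in auto)
    moreover have "exp (- (- l2 * ln P)) = P powr l2" using Pp by (simp add: powr_def)
    moreover have "exp (- (l1 / l2) * (- l2 * ln P)) = P powr l1" using Pp l2 by (simp add: powr_def)
    ultimately have "(l1 / l2) * (1 - P powr l2) < 1 - P powr l1" by simp
    then show ?thesis using l2 by (simp add: field_simps)
  qed
  have "(1 powr l2 - P powr l2) / (l1 * l2) - P powr l1 * (1 powr (l2 - l1) - P powr (l2 - l1)) / (l1 * (l2 - l1))
      = (l2 * (1 - P powr l1) - l1 * (1 - P powr l2)) / (l1 * l2 * (l2 - l1))"
    using l1 l2 l12 pa by (simp add: field_simps)
  also have "\<dots> > 0" using key l1 l2 l12 by (intro divide_pos_pos) auto
  finally show ?thesis .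
qed

lemma t1: fixes A B C D e l1 :: real shows "e \<noteq> 0 \<Longrightarrow> l1 \<noteq> 0 \<Longrightarrow> l1 + e \<noteq> 0 \<Longrightarrow> (C - A*B)/(l1*(l1+e)) - A*(D-B)/(l1*e) = (C - A*((l1+e)/e*D - l1/e*B))/(l1*(l1+e))"
  apply (simp add: divide_simps)
  apply (simp add: algebra_simps)
  done

lemma t2: fixes A B e l1 :: real shows "e \<noteq> 0 \<Longrightarrow> l1 \<noteq> 0 \<Longrightarrow> l1 + e \<noteq> 0 \<Longrightarrow> (1 - A*B)/(l1*(l1+e)) - A*(1-B)/(l1*e) = ((l1+e)/e*(1 - A) - l1/e*(1 - A*B))/(l1*(l1+e))"
  apply (simp add: divide_simps)
  apply (simp add: algebra_simps)
  done

lemma final_value: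
  fixes P Q l1 l2 :: real
  assumes l1: "0 < l1" and l12: "l1 < l2"
  shows "((Q powr l2 - P powr l2) / (l1 * l2) - P powr l1 * (Q powr (l2 - l1) - P powr (l2 - l1)) / (l1 * (l2 - l1)))
       / ((1 powr l2 - P powr l2) / (l1 * l2) - P powr l1 * (1 powr (l2 - l1) - P powr (l2 - l1)) / (l1 * (l2 - l1)))
     = (let \<beta>\<^sub>1 = l1 / (l2 - l1); \<beta>\<^sub>2 = l2 / (l2 - l1) in
       (Q powr l2 - P powr l1 *
          (\<beta>\<^sub>2 * Q powr (l2 - l1) - \<beta>\<^sub>1 * P powr (l2 - l1)))
       / (\<beta>\<^sub>2 * (1 - P powr l1) - \<beta>\<^sub>1 * (1 - P powr l2)))"
proof -
  have l2: "l2 > 0" using l1 l12 by simp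
  have pa: "P powr l1 * P powr (l2 - l1) = P powr l2" by (simp add: powr_add[symmetric])
  define A where "A = P powr l1" define B where "B = P powr (l2 - l1)"
  define C where "C = Q powr l2" define D where "D = Q powr (l2 - l1)"
  have pa': "P powr l2 = A * B" using pa A_def B_def by simp
  have ne: "l2 - l1 \<noteq> 0" "l1 \<noteq> 0" "l2 \<noteq> 0" using l1 l12 by auto
  define e where "e = l2 - l1"
  have l2e: "l2 = l1 + e" and e0: "e \<noteq> 0" "l1 + e \<noteq> 0" using e_def ne by auto
  have e1': "e * l1 + l1 * l1 \<noteq> 0" "e * (e * (e * l1)) + e * (e * (l1 * l1)) \<noteq> 0"
  proof -
    have "e * l1 + l1 * l1 = l1 * (l1 + e)" "e * (e * (e * l1)) + e * (e * (l1 * l1)) = e * e * l1 * (l1 + e)"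
      by (simp_all add: algebra_simps)
    then show "e * l1 + l1 * l1 \<noteq> 0" "e * (e * (e * l1)) + e * (e * (l1 * l1)) \<noteq> 0"
      using e0 ne(2) by simp_all
  qed
  have e1: "(Q powr l2 - P powr l2) / (l1 * l2) - P powr l1 * (Q powr (l2 - l1) - P powr (l2 - l1)) / (l1 * (l2 - l1))
     = (Q powr l2 - P powr l1 * (l2 / (l2 - l1) * Q powr (l2 - l1) - l1 / (l2 - l1) * P powr (l2 - l1))) / (l1 * l2)"
    unfolding pa' A_def[symmetric] B_def[symmetric] C_def[symmetric] D_def[symmetric]
    unfolding e_def[symmetric] unfolding l2e using t1[OF e0(1) ne(2) e0(2), of C A B D] by simp
  have e2: "(1 powr l2 - P powr l2) / (l1 * l2) - P powr l1 * (1 powr (l2 - l1) - P powr (l2 - l1)) / (l1 * (l2 - l1))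
     = (l2 / (l2 - l1) * (1 - P powr l1) - l1 / (l2 - l1) * (1 - P powr l2)) / (l1 * l2)"
    unfolding pa' A_def[symmetric] B_def[symmetric]
    unfolding e_def[symmetric] unfolding l2e using t2[OF e0(1) ne(2) e0(2), of A B] by simp
  have cancel: "(x / (l1 * l2)) / (y / (l1 * l2)) = x / y" for x y
    using ne by (cases "y = 0") (simp_all add: field_simps)
  show ?thesis unfolding e1 e2 cancel Let_def ..
qed



lemma (in prob_space) cdf_facts:
  fixes V :: "'a \<Rightarrow> real"
  assumes V: "V \<in> borel_measurable M" and cdf: "\<And>x. prob {\<omega>\<in>space M. V \<omega> \<le> x} = F x"
  shows "mono F" "\<And>x. 0 \<le> F x" "\<And>x. F x \<le> 1" "(F \<longlongrightarrow> 1) at_top" "(F \<longlongrightarrow> 0) at_bot"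
proof -
  interpret R: real_distribution "distr M borel V" using V by simp
  have eq: "cdf (distr M borel V) = F"
  proof
    fix x
    have "cdf (distr M borel V) x = measure (distr M borel V) {..x}" by (simp add: cdf_def)
    also have "\<dots> = prob (V -` {..x} \<inter> space M)" using V by (simp add: measure_distr)
    also have "V -` {..x} \<inter> space M = {\<omega>\<in>space M. V \<omega> \<le> x}" by auto
    finally show "cdf (distr M borel V) x = F x" using cdf by simp
  qed
  show "mono F" using R.cdf_nondecreasing unfolding eq[symmetric] mono_def by blast
  show "\<And>x. 0 \<le> F x" using R.cdf_nonneg eq by metis
  show "\<And>x. F x \<le> 1" using R.cdf_bounded_prob eq by metis
  show "(F \<longlongrightarrow> 1) at_top" using R.cdf_lim_at_top_prob eq by metis
  show "(F \<longlongrightarrow> 0) at_bot" using R.cdf_lim_at_bot eq by metis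
qed

lemma (in prob_space) cdf_uniform:
  fixes V :: "'a \<Rightarrow> real"
  assumes V: "V \<in> borel_measurable M" and cdf: "\<And>x. prob {\<omega>\<in>space M. V \<omega> \<le> x} = F x"
    and cont: "continuous_on UNIV F"
  shows "distributed M lborel (\<lambda>\<omega>. F (V \<omega>)) (\<lambda>x. indicator {0..1} x / measure lborel {0..1::real})"
proof -
  note facts = cdf_facts[OF V cdf]
  have Fmeas: "F \<in> borel_measurable borel" using cont by (simp add: borel_measurable_continuous_onI)
  have FV: "(\<lambda>\<omega>. F (V \<omega>)) \<in> borel_measurable M" using Fmeas V by measurable
  have main: "prob {\<omega>\<in>space M. F (V \<omega>) \<le> t} = t" if t: "0 \<le> t" "t \<le> 1" for t
  proof (cases "t = 1")
    case True
    then have "{\<omega>\<in>space M. F (V \<omega>) \<le> t} = space M" using facts(3) by auto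
    then show ?thesis using True by (simp add: prob_space)
  next
    case False
    then have t1: "t < 1" using t by simp
    have "eventually (\<lambda>x. F x > t) at_top" using facts(4) t1 by (simp add: order_tendsto_iff)
    then obtain B where B: "\<And>x. x \<ge> B \<Longrightarrow> F x > t" by (auto simp: eventually_at_top_linorder)
    show ?thesis
    proof (cases "\<exists>x. F x \<le> t")
      case True
      define S where "S = {x. F x \<le> t}"
      have bdd: "bdd_above S" unfolding S_def bdd_above_def using B
        by (metis linorder_not_le mem_Collect_eq order_less_imp_le)
      have ne: "S \<noteq> {}" using True S_def by auto
      have cl: "closed S" unfolding S_def using cont
        by (intro closed_Collect_le continuous_intros) auto
      define s where "s = Sup S"
      have sS: "s \<in> S" unfolding s_def using closed_contains_Sup[OF ne bdd cl] .
      have Fs: "F s = t"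
      proof (rule ccontr)
        assume "F s \<noteq> t"
        then have lt: "F s < t" using sS S_def by auto
        have ic: "isCont F s" using cont by (simp add: continuous_on_eq_continuous_at)
        have z: "(\<lambda>n. 1 / (real n + 1)) \<longlonglongrightarrow> 0"
          using LIMSEQ_Suc[OF lim_1_over_n] by (simp add: add.commute)
        have "(\<lambda>n. s + 1 / (real n + 1)) \<longlonglongrightarrow> s + 0"
          by (intro tendsto_intros z)
        then have "(\<lambda>n. F (s + 1 / (real n + 1))) \<longlonglongrightarrow> F s"
          using isCont_tendsto_compose[OF ic] by simp
        then have "eventually (\<lambda>n. F (s + 1 / (real n + 1)) < t) sequentially"
          using lt by (simp add: order_tendsto_iff)
        then obtain n where "F (s + 1 / (real n + 1)) < t" by (auto simp: eventually_sequentially)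
        then have "s + 1 / (real n + 1) \<in> S" by (simp add: S_def)
        then have "s + 1 / (real n + 1) \<le> s" unfolding s_def using bdd by (rule cSup_upper)
        moreover have "1 / (real n + 1) > 0" by simp
        ultimately show False by linarith
      qed
      have "{\<omega>\<in>space M. F (V \<omega>) \<le> t} = {\<omega>\<in>space M. V \<omega> \<le> s}"
      proof (intro Collect_cong conj_cong refl iffI)
        fix \<omega> assume "F (V \<omega>) \<le> t"
        then have "V \<omega> \<in> S" by (simp add: S_def)
        then show "V \<omega> \<le> s" unfolding s_def using bdd by (rule cSup_upper)
      next
        fix \<omega> assume "V \<omega> \<le> s"
        then show "F (V \<omega>) \<le> t" using facts(1) Fs by (metis monoD)
      qed
      then show ?thesis using cdf Fs by simp
    next
      case False
      then have all: "\<And>x. F x > t" by (meson not_le)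
      have "t \<le> 0"
      proof (rule ccontr)
        assume "\<not> t \<le> 0"
        then have "eventually (\<lambda>x. F x < t) at_bot" using facts(5) by (simp add: order_tendsto_iff)
        then obtain x where "F x < t" by (auto simp: eventually_at_bot_linorder)
        then show False using all[of x] by simp
      qed
      then have "t = 0" using t by simp
      moreover have "{\<omega>\<in>space M. F (V \<omega>) \<le> t} = {}" using all by (auto simp: not_le[symmetric])
      ultimately show ?thesis by (metis measure_empty)
    qed
  qed
  show ?thesis
    using FV main by (subst uniform_distributed_iff) auto
qed

lemma (in prob_space) bounded_integrable:
  fixes f :: "'a \<Rightarrow> real"
  assumes "f \<in> borel_measurable M" "\<And>\<omega>. \<bar>f \<omega>\<bar> \<le> B"
  shows "integrable M f"
  using assms by (intro integrable_const_bound[where B=B]) auto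

lemma (in prob_space) integral_cdf_power:
  fixes V :: "'a \<Rightarrow> real" and S :: "real set"
  assumes V: "V \<in> borel_measurable M" and cdf: "\<And>x. prob {\<omega>\<in>space M. V \<omega> \<le> x} = F x"
    and cont: "continuous_on UNIV F" and Sm: "S \<in> sets borel"
    and lo: "{x. p < F x \<and> F x < r} \<subseteq> S" and hi: "S \<subseteq> {x. p \<le> F x \<and> F x \<le> r}"
    and p0: "0 \<le> p" and pr: "p \<le> r" and r1: "r \<le> 1"
  shows "(\<integral>\<omega>. indicator S (V \<omega>) * F (V \<omega>) ^ m \<partial>M) = (r ^ Suc m - p ^ Suc m) / Suc m"
proof -
  note facts = cdf_facts[OF V cdf]
  note D = cdf_uniform[OF V cdf cont]
  have Fmeas[measurable]: "F \<in> borel_measurable borel" using cont by (simp add: borel_measurable_continuous_onI)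
  have [measurable]: "S \<in> sets borel" by fact
  have [measurable]: "V \<in> borel_measurable M" by fact
  let ?g1 = "\<lambda>t::real. indicator {p<..<r} t * t ^ m"
  let ?g2 = "\<lambda>t::real. indicator {p..r} t * t ^ m"
  have e2: "(\<integral>\<omega>. ?g2 (F (V \<omega>)) \<partial>M) = (r ^ Suc m - p ^ Suc m) / Suc m"
  proof -
    have "(\<integral>\<omega>. ?g2 (F (V \<omega>)) \<partial>M) = (\<integral>t. indicator {0..1} t / measure lborel {0..1::real} * ?g2 t \<partial>lborel)"
      by (rule distributed_integral[OF D, symmetric]) auto
    also have "\<dots> = (\<integral>t. t ^ m * indicator {p..r} t \<partial>lborel)"
      using p0 r1 by (intro Bochner_Integration.integral_cong) (auto simp: indicator_def)
    also have "\<dots> = (r ^ Suc m - p ^ Suc m) / Suc m" using pr by (rule integral_power)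
    finally show ?thesis .
  qed
  have e1: "(\<integral>\<omega>. ?g1 (F (V \<omega>)) \<partial>M) = (r ^ Suc m - p ^ Suc m) / Suc m"
  proof -
    have "(\<integral>\<omega>. ?g1 (F (V \<omega>)) \<partial>M) = (\<integral>t. indicator {0..1} t / measure lborel {0..1::real} * ?g1 t \<partial>lborel)"
      by (rule distributed_integral[OF D, symmetric]) auto
    also have "\<dots> = (\<integral>t. t ^ m * indicator {p..r} t \<partial>lborel)"
    proof (rule integral_cong_AE)
      show "AE t in lborel. indicator {0..1} t / measure lborel {0..1::real} * ?g1 t = t ^ m * indicator {p..r} t"
        using AE_lborel_singleton[of p] AE_lborel_singleton[of r]
        by eventually_elim (use p0 r1 in \<open>auto simp: indicator_def\<close>)
    qed auto
    also have "\<dots> = (r ^ Suc m - p ^ Suc m) / Suc m" using pr by (rule integral_power)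
    finally show ?thesis .
  qed
  have i1: "integrable M (\<lambda>\<omega>. ?g1 (F (V \<omega>)))"
    by (rule bounded_integrable[where B=1], measurable, use facts in \<open>auto simp: indicator_def intro!: power_le_one\<close>)
  have i2: "integrable M (\<lambda>\<omega>. ?g2 (F (V \<omega>)))"
    by (rule bounded_integrable[where B=1], measurable, use facts in \<open>auto simp: indicator_def intro!: power_le_one\<close>)
  have i: "integrable M (\<lambda>\<omega>. indicator S (V \<omega>) * F (V \<omega>) ^ m)"
    by (rule bounded_integrable[where B=1], measurable, use facts in \<open>auto simp: indicator_def intro!: power_le_one\<close>)
  have "(\<integral>\<omega>. ?g1 (F (V \<omega>)) \<partial>M) \<le> (\<integral>\<omega>. indicator S (V \<omega>) * F (V \<omega>) ^ m \<partial>M)"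
    by (rule integral_mono[OF i1 i]) (use lo facts(2) in \<open>auto simp: indicator_def\<close>)
  moreover have "(\<integral>\<omega>. indicator S (V \<omega>) * F (V \<omega>) ^ m \<partial>M) \<le> (\<integral>\<omega>. ?g2 (F (V \<omega>)) \<partial>M)"
    by (rule integral_mono[OF i i2]) (use hi facts(2) in \<open>auto simp: indicator_def\<close>)
  ultimately show ?thesis using e1 e2 by linarith
qed

lemma (in prob_space) indep_var_prob_integral:
  assumes ind: "indep_var N1 Z N2 W" and S: "S \<in> sets (N1 \<Otimes>\<^sub>M N2)"
    and g: "\<And>z. z \<in> space N1 \<Longrightarrow> prob {\<omega>\<in>space M. (z, W \<omega>) \<in> S} = g z"
    and gm: "g \<in> borel_measurable N1"
  shows "prob {\<omega>\<in>space M. (Z \<omega>, W \<omega>) \<in> S} = (\<integral>\<omega>. g (Z \<omega>) \<partial>M)"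
proof -
  have Zm: "Z \<in> measurable M N1" and Wm: "W \<in> measurable M N2"
    using indep_var_rv1[OF ind] indep_var_rv2[OF ind] by auto
  have eqD: "distr M N1 Z \<Otimes>\<^sub>M distr M N2 W = distr M (N1 \<Otimes>\<^sub>M N2) (\<lambda>x. (Z x, W x))"
    using ind by (simp add: indep_var_distribution_eq)
  interpret PZ: prob_space "distr M N1 Z" using Zm by (rule prob_space_distr)
  interpret PW: prob_space "distr M N2 W" using Wm by (rule prob_space_distr)
  have ZW: "(\<lambda>x. (Z x, W x)) \<in> measurable M (N1 \<Otimes>\<^sub>M N2)" using Zm Wm by (rule measurable_Pair)
  have gb: "0 \<le> g z \<and> g z \<le> 1" if "z \<in> space N1" for z
    using g[OF that, symmetric] by auto
  have "emeasure M {\<omega>\<in>space M. (Z \<omega>, W \<omega>) \<in> S} = emeasure (distr M (N1 \<Otimes>\<^sub>M N2) (\<lambda>x. (Z x, W x))) S"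
    using S ZW by (subst emeasure_distr) (auto intro!: arg_cong[where f="emeasure M"])
  also have "\<dots> = emeasure (distr M N1 Z \<Otimes>\<^sub>M distr M N2 W) S" using eqD by simp
  also have "\<dots> = (\<integral>\<^sup>+z. emeasure (distr M N2 W) (Pair z -` S) \<partial>distr M N1 Z)"
    using S by (intro PW.emeasure_pair_measure_alt) simp
  also have "\<dots> = (\<integral>\<^sup>+z. ennreal (g z) \<partial>distr M N1 Z)"
  proof (rule nn_integral_cong)
    fix z assume z: "z \<in> space (distr M N1 Z)"
    have "emeasure (distr M N2 W) (Pair z -` S) = emeasure M (W -` (Pair z -` S) \<inter> space M)"
      using S z Wm by (intro emeasure_distr) (auto intro!: measurable_Pair2')
    also have "W -` (Pair z -` S) \<inter> space M = {\<omega>\<in>space M. (z, W \<omega>) \<in> S}" by auto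
    also have "emeasure M \<dots> = ennreal (g z)"
      using z g[of z] by (simp add: emeasure_eq_measure)
    finally show "emeasure (distr M N2 W) (Pair z -` S) = ennreal (g z)" .
  qed
  also have "\<dots> = (\<integral>\<^sup>+\<omega>. ennreal (g (Z \<omega>)) \<partial>M)"
    using gm Zm by (intro nn_integral_distr) auto
  also have "\<dots> = ennreal (\<integral>\<omega>. g (Z \<omega>) \<partial>M)"
  proof (rule nn_integral_eq_integral)
    show "integrable M (\<lambda>\<omega>. g (Z \<omega>))"
      by (rule integrable_const_bound[where B=1])
         (use gb Zm measurable_space[OF Zm] gm in \<open>auto\<close>)
    show "AE \<omega> in M. 0 \<le> g (Z \<omega>)"
      using gb measurable_space[OF Zm] by auto
  qed
  finally show ?thesis
    by (simp add: emeasure_eq_measure integral_nonneg_AE gb measurable_space[OF Zm])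
qed

lemma (in prob_space) prob_less_cdf:
  fixes V :: "'a \<Rightarrow> real"
  assumes V: "V \<in> borel_measurable M" and cdf: "\<And>x. prob {\<omega>\<in>space M. V \<omega> \<le> x} = F x"
    and cont: "continuous_on UNIV F"
  shows "prob {\<omega>\<in>space M. V \<omega> < z} = F z"
proof -
  interpret R: real_distribution "distr M borel V" using V by simp
  have eq: "cdf (distr M borel V) = F"
  proof
    fix x
    have "cdf (distr M borel V) x = measure (distr M borel V) {..x}" by (simp add: cdf_def)
    also have "\<dots> = prob (V -` {..x} \<inter> space M)" using V by (simp add: measure_distr)
    also have "V -` {..x} \<inter> space M = {\<omega>\<in>space M. V \<omega> \<le> x}" by auto
    finally show "cdf (distr M borel V) x = F x" using cdf by simp
  qed
  have l1: "(F \<longlongrightarrow> measure (distr M borel V) {..<z}) (at_left z)"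
    using R.cdf_at_left[of z] eq by simp
  have l2: "(F \<longlongrightarrow> F z) (at_left z)"
    using cont by (metis continuous_on_eq_continuous_at open_UNIV UNIV_I isCont_def filterlim_at_split)
  have "measure (distr M borel V) {..<z} = F z"
    using tendsto_unique[OF _ l1 l2] by simp
  moreover have "measure (distr M borel V) {..<z} = prob {\<omega>\<in>space M. V \<omega> < z}"
    using V by (simp add: measure_distr vimage_def Int_def conj_commute)
  ultimately show ?thesis by simp
qed

locale iid_setup = prob_space +
  fixes X :: "nat \<Rightarrow> 'a \<Rightarrow> real" and F :: "real \<Rightarrow> real"
  assumes Xm[measurable]: "\<And>i. X i \<in> borel_measurable M"
    and ind: "indep_vars (\<lambda>_. borel) X UNIV"
    and cdf: "\<And>i x. prob {\<omega>\<in>space M. X i \<omega> \<le> x} = F x"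
    and cont: "continuous_on UNIV F"
begin

lemma Fmeas[measurable]: "F \<in> borel_measurable borel"
  using cont by (simp add: borel_measurable_continuous_onI)

lemma prob_block:
  assumes B: "finite B"
  shows "prob {\<omega>\<in>space M. \<forall>i\<in>B. X i \<omega> < z} = F z ^ card B"
proof (cases "B = {}")
  case True
  then show ?thesis by (simp add: prob_space)
next
  case False
  have "prob {\<omega>\<in>space M. \<forall>i\<in>B. X i \<omega> < z} = prob (\<Inter>i\<in>B. X i -` {..<z} \<inter> space M)"
    using False by (intro arg_cong[where f=prob]) auto
  also have "\<dots> = (\<Prod>i\<in>B. prob (X i -` {..<z} \<inter> space M))"
    using False B by (intro indep_varsD[OF ind]) auto
  also have "\<dots> = (\<Prod>i\<in>B. F z)"
  proof (rule prod.cong[OF refl])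
    fix i
    have "X i -` {..<z} \<inter> space M = {\<omega>\<in>space M. X i \<omega> < z}" by auto
    then show "prob (X i -` {..<z} \<inter> space M) = F z"
      using prob_less_cdf[OF Xm cdf cont] by simp
  qed
  finally show ?thesis by simp
qed


lemma restrict_space_PiM: "(\<lambda>i\<in>B. X i \<omega>) \<in> space (PiM B (\<lambda>_. borel))"
  by (simp add: space_PiM)

lemma inner1:
  assumes T[measurable]: "T \<in> sets borel"
  shows "prob {\<omega>\<in>space M. (\<forall>i\<in>{1..<j}. X i \<omega> < X j \<omega>) \<and> X j \<omega> \<in> T}
     = (\<integral>\<omega>. indicator T (X j \<omega>) * F (X j \<omega>) ^ (j - 1) \<partial>M)"
proof -
  let ?N1 = "PiM {j} (\<lambda>_. borel::real measure)"
  let ?N2 = "PiM {1..<j} (\<lambda>_. borel::real measure)"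
  define S where "S = {p\<in>space (?N1 \<Otimes>\<^sub>M ?N2). (\<forall>i\<in>{1..<j}. snd p i < fst p j) \<and> fst p j \<in> T}"
  have Sm: "S \<in> sets (?N1 \<Otimes>\<^sub>M ?N2)" unfolding S_def by measurable
  have indj: "indep_var ?N1 (\<lambda>\<omega>. \<lambda>i\<in>{j}. X i \<omega>) ?N2 (\<lambda>\<omega>. \<lambda>i\<in>{1..<j}. X i \<omega>)"
    by (rule indep_var_restrict[OF ind]) auto
  have "prob {\<omega>\<in>space M. ((\<lambda>i\<in>{j}. X i \<omega>), (\<lambda>i\<in>{1..<j}. X i \<omega>)) \<in> S}
     = (\<integral>\<omega>. (\<lambda>f. indicator T (f j) * F (f j) ^ (j - 1)) (\<lambda>i\<in>{j}. X i \<omega>) \<partial>M)"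
  proof (rule indep_var_prob_integral[OF indj Sm])
    show "(\<lambda>f. indicator T (f j) * F (f j) ^ (j - 1)) \<in> borel_measurable ?N1" by measurable
    fix z :: "nat \<Rightarrow> real" assume z: "z \<in> space ?N1"
    show "prob {\<omega>\<in>space M. (z, \<lambda>i\<in>{1..<j}. X i \<omega>) \<in> S} = indicator T (z j) * F (z j) ^ (j - 1)"
    proof (cases "z j \<in> T")
      case True
      have "{\<omega>\<in>space M. (z, \<lambda>i\<in>{1..<j}. X i \<omega>) \<in> S} = {\<omega>\<in>space M. \<forall>i\<in>{1..<j}. X i \<omega> < z j}"
        using True z by (auto simp: S_def space_pair_measure space_PiM)
      then show ?thesis using True prob_block[of "{1..<j}" "z j"] by simp
    next
      case False
      have "{\<omega>\<in>space M. (z, \<lambda>i\<in>{1..<j}. X i \<omega>) \<in> S} = {}"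
        using False by (auto simp: S_def)
      then show ?thesis using False by (metis measure_empty indicator_simps(2) mult_zero_left)
    qed
  qed
  moreover have "{\<omega>\<in>space M. ((\<lambda>i\<in>{j}. X i \<omega>), (\<lambda>i\<in>{1..<j}. X i \<omega>)) \<in> S}
     = {\<omega>\<in>space M. (\<forall>i\<in>{1..<j}. X i \<omega> < X j \<omega>) \<and> X j \<omega> \<in> T}"
    by (auto simp: S_def space_pair_measure space_PiM)
  ultimately show ?thesis by simp
qed

lemma Ffacts: "mono F" "\<And>x. 0 \<le> F x" "\<And>x. F x \<le> 1"
  using cdf_facts[OF Xm[of 0] cdf[of 0]] by auto

lemma int_power:
  assumes Sm: "S \<in> sets borel" and lo: "{x. p < F x \<and> F x < r} \<subseteq> S" and hi: "S \<subseteq> {x. p \<le> F x \<and> F x \<le> r}"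
    and p0: "0 \<le> p" and pr: "p \<le> r" and r1: "r \<le> 1"
  shows "(\<integral>\<omega>. indicator S (X i \<omega>) * F (X i \<omega>) ^ m \<partial>M) = (r ^ Suc m - p ^ Suc m) / Suc m"
  by (rule integral_cdf_power[OF Xm cdf cont Sm lo hi p0 pr r1])

lemma inner2:
  assumes j1: "1 \<le> j" and jk: "j < k"
  shows "prob {\<omega>\<in>space M. (\<forall>i\<in>{1..<j}. X i \<omega> < X j \<omega>) \<and> c < X j \<omega> \<and> X j \<omega> < z \<and> (\<forall>i\<in>{j<..<k}. X i \<omega> < z)}
     = F z ^ (k - j - 1) * (if c < z then (F z ^ j - F c ^ j) / j else 0)"
proof -
  let ?A = "{j<..<k}" and ?B = "{1..j}"
  let ?RA = "\<lambda>\<omega>. \<lambda>i\<in>?A. X i \<omega>" and ?RB = "\<lambda>\<omega>. \<lambda>i\<in>?B. X i \<omega>"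
  define Xa where "Xa = {f\<in>space (PiM ?A (\<lambda>_. borel::real measure)). \<forall>i\<in>?A. f i < z}"
  define Xb where "Xb = {f\<in>space (PiM ?B (\<lambda>_. borel::real measure)). (\<forall>i\<in>{1..<j}. f i < f j) \<and> f j \<in> {c<..<z}}"
  have jB: "j \<in> ?B" using j1 by simp
  have Xam: "Xa \<in> sets (PiM ?A (\<lambda>_. borel::real measure))" unfolding Xa_def by measurable
  have Xbm: "Xb \<in> sets (PiM ?B (\<lambda>_. borel::real measure))" unfolding Xb_def using jB by measurable
  have indAB: "indep_var (PiM ?A (\<lambda>_. borel)) ?RA (PiM ?B (\<lambda>_. borel)) ?RB"
    by (rule indep_var_restrict[OF ind]) auto
  have "prob ((\<lambda>x. (?RA x, ?RB x)) -` (Xa \<times> Xb) \<inter> space M) = prob (?RA -` Xa \<inter> space M) * prob (?RB -` Xb \<inter> space M)"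
    by (rule indep_varD[OF indAB Xam Xbm])
  moreover have "(\<lambda>x. (?RA x, ?RB x)) -` (Xa \<times> Xb) \<inter> space M =
     {\<omega>\<in>space M. (\<forall>i\<in>{1..<j}. X i \<omega> < X j \<omega>) \<and> c < X j \<omega> \<and> X j \<omega> < z \<and> (\<forall>i\<in>{j<..<k}. X i \<omega> < z)}"
    using jB by (auto simp: Xa_def Xb_def space_PiM)
  moreover have "?RA -` Xa \<inter> space M = {\<omega>\<in>space M. \<forall>i\<in>?A. X i \<omega> < z}"
    by (auto simp: Xa_def space_PiM)
  moreover have "?RB -` Xb \<inter> space M = {\<omega>\<in>space M. (\<forall>i\<in>{1..<j}. X i \<omega> < X j \<omega>) \<and> X j \<omega> \<in> {c<..<z}}"
    using jB by (auto simp: Xb_def space_PiM)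
  moreover have "prob {\<omega>\<in>space M. \<forall>i\<in>?A. X i \<omega> < z} = F z ^ (k - j - 1)"
    using prob_block[of ?A z] by simp
  moreover have "prob {\<omega>\<in>space M. (\<forall>i\<in>{1..<j}. X i \<omega> < X j \<omega>) \<and> X j \<omega> \<in> {c<..<z}}
      = (if c < z then (F z ^ j - F c ^ j) / j else 0)"
  proof (cases "c < z")
    case True
    have "prob {\<omega>\<in>space M. (\<forall>i\<in>{1..<j}. X i \<omega> < X j \<omega>) \<and> X j \<omega> \<in> {c<..<z}}
      = (\<integral>\<omega>. indicator {c<..<z} (X j \<omega>) * F (X j \<omega>) ^ (j - 1) \<partial>M)"
      by (rule inner1) simp
    also have "\<dots> = (F z ^ Suc (j - 1) - F c ^ Suc (j - 1)) / Suc (j - 1)"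
    proof (rule int_power)
      show "{x. F c < F x \<and> F x < F z} \<subseteq> {c<..<z}"
        using Ffacts(1) by (auto simp: mono_def) (meson not_le)+
      show "{c<..<z} \<subseteq> {x. F c \<le> F x \<and> F x \<le> F z}"
        using Ffacts(1) by (auto simp: mono_def)
      show "F c \<le> F z" using Ffacts(1) True by (auto simp: mono_def)
    qed (auto simp: Ffacts)
    also have "Suc (j - 1) = j" using j1 by simp
    finally show ?thesis using True by simp
  next
    case False
    then have "{\<omega>\<in>space M. (\<forall>i\<in>{1..<j}. X i \<omega> < X j \<omega>) \<and> X j \<omega> \<in> {c<..<z}} = {}" by auto
    then show ?thesis using False by (metis measure_empty)
  qed
  ultimately show ?thesis by simp
qed

lemma record_prob:
  assumes j1: "1 \<le> j" and jk: "j < k" and Im[measurable]: "I \<in> sets borel"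
    and lo: "{x. F c < F x \<and> F x < r} \<subseteq> {x. c < x \<and> x \<in> I}"
    and hi: "{x. c < x \<and> x \<in> I} \<subseteq> {x. F c \<le> F x \<and> F x \<le> r}"
    and r1: "r \<le> 1" and pr: "F c \<le> r"
  shows "prob {\<omega>\<in>space M. c < X j \<omega> \<and> X k \<omega> \<in> I \<and> is_record X j \<omega> \<and> is_record X k \<omega>}
    = (1 / real j) * ((r ^ k - F c ^ k) / real k - F c ^ j * (r ^ (k - j) - F c ^ (k - j)) / real (k - j))"
proof -
  let ?N1 = "PiM {k} (\<lambda>_. borel::real measure)"
  let ?N2 = "PiM {1..<k} (\<lambda>_. borel::real measure)"
  let ?I' = "{x. c < x \<and> x \<in> I}"
  have I'm[measurable]: "?I' \<in> sets borel" by measurable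
  define S where "S = {p\<in>space (?N1 \<Otimes>\<^sub>M ?N2). fst p k \<in> I \<and> (\<forall>i\<in>{1..<j}. snd p i < snd p j) \<and> c < snd p j
      \<and> snd p j < fst p k \<and> (\<forall>i\<in>{j<..<k}. snd p i < fst p k)}"
  have jK: "j \<in> {1..<k}" using j1 jk by simp
  have sub1[simp]: "i \<in> {1..<k}" if "i \<in> {1..<j}" for i using that jk by auto
  have sub2[simp]: "i \<in> {1..<k}" if "i \<in> {j<..<k}" for i using that j1 by auto
  have Sm: "S \<in> sets (?N1 \<Otimes>\<^sub>M ?N2)" unfolding S_def using jK
    apply measurable
    using jk j1 apply auto[1]
    using jk j1 apply measurable
    using jk j1 apply auto
    done
  have indk: "indep_var ?N1 (\<lambda>\<omega>. \<lambda>i\<in>{k}. X i \<omega>) ?N2 (\<lambda>\<omega>. \<lambda>i\<in>{1..<k}. X i \<omega>)"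
    by (rule indep_var_restrict[OF ind]) auto
  define g where "g = (\<lambda>x. indicator ?I' x * (F x ^ (k - j - 1) * ((F x ^ j - F c ^ j) / j)))"
  have gm[measurable]: "g \<in> borel_measurable borel" unfolding g_def by measurable
  have A: "prob {\<omega>\<in>space M. ((\<lambda>i\<in>{k}. X i \<omega>), (\<lambda>i\<in>{1..<k}. X i \<omega>)) \<in> S}
     = (\<integral>\<omega>. (\<lambda>f. g (f k)) (\<lambda>i\<in>{k}. X i \<omega>) \<partial>M)"
  proof (rule indep_var_prob_integral[OF indk Sm])
    show "(\<lambda>f. g (f k)) \<in> borel_measurable ?N1" by measurable
    fix z :: "nat \<Rightarrow> real" assume z: "z \<in> space ?N1"
    show "prob {\<omega>\<in>space M. (z, \<lambda>i\<in>{1..<k}. X i \<omega>) \<in> S} = g (z k)"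
    proof (cases "z k \<in> I")
      case True
      have "{\<omega>\<in>space M. (z, \<lambda>i\<in>{1..<k}. X i \<omega>) \<in> S} = {\<omega>\<in>space M. (\<forall>i\<in>{1..<j}. X i \<omega> < X j \<omega>) \<and> c < X j \<omega> \<and> X j \<omega> < z k \<and> (\<forall>i\<in>{j<..<k}. X i \<omega> < z k)}"
        using True z jK by (auto simp: S_def space_pair_measure space_PiM)
      then show ?thesis using True inner2[OF j1 jk, of c "z k"] by (simp add: g_def indicator_def)
    next
      case False
      have "{\<omega>\<in>space M. (z, \<lambda>i\<in>{1..<k}. X i \<omega>) \<in> S} = {}"
        using False by (auto simp: S_def)
      then have "prob {\<omega>\<in>space M. (z, \<lambda>i\<in>{1..<k}. X i \<omega>) \<in> S} = 0" by (metis measure_empty)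
      then show ?thesis using False by (simp add: g_def)
    qed
  qed
  have B: "{\<omega>\<in>space M. ((\<lambda>i\<in>{k}. X i \<omega>), (\<lambda>i\<in>{1..<k}. X i \<omega>)) \<in> S}
     = {\<omega>\<in>space M. c < X j \<omega> \<and> X k \<omega> \<in> I \<and> is_record X j \<omega> \<and> is_record X k \<omega>}"
  proof -
    have "(\<forall>i\<in>{1..<j}. X i \<omega> < X j \<omega>) \<and> X j \<omega> < X k \<omega> \<and> (\<forall>i\<in>{j<..<k}. X i \<omega> < X k \<omega>)
       \<longleftrightarrow> is_record X j \<omega> \<and> is_record X k \<omega>" for \<omega>
    proof
      assume H: "(\<forall>i\<in>{1..<j}. X i \<omega> < X j \<omega>) \<and> X j \<omega> < X k \<omega> \<and> (\<forall>i\<in>{j<..<k}. X i \<omega> < X k \<omega>)"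
      have "X i \<omega> < X k \<omega>" if "i \<in> {1..<k}" for i
      proof -
        consider "i < j" | "i = j" | "j < i" by linarith
        then show ?thesis
        proof cases
          case 1 then have "X i \<omega> < X j \<omega>" using H that by auto
          then show ?thesis using H by linarith
        next
          case 2 then show ?thesis using H by simp
        next
          case 3 then show ?thesis using H that by auto
        qed
      qed
      then show "is_record X j \<omega> \<and> is_record X k \<omega>" using H by (auto simp: is_record_def)
    next
      assume "is_record X j \<omega> \<and> is_record X k \<omega>"
      then show "(\<forall>i\<in>{1..<j}. X i \<omega> < X j \<omega>) \<and> X j \<omega> < X k \<omega> \<and> (\<forall>i\<in>{j<..<k}. X i \<omega> < X k \<omega>)"
        using jK by (auto simp: is_record_def)
    qed
    then show ?thesis using jK by (auto simp: S_def space_pair_measure space_PiM)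
  qed
  have C: "(\<integral>\<omega>. g (X k \<omega>) \<partial>M)
     = (1 / real j) * ((r ^ k - F c ^ k) / real k - F c ^ j * (r ^ (k - j) - F c ^ (k - j)) / real (k - j))"
  proof -
    let ?f1 = "\<lambda>\<omega>. indicator ?I' (X k \<omega>) * F (X k \<omega>) ^ (k - 1)"
    let ?f2 = "\<lambda>\<omega>. indicator ?I' (X k \<omega>) * F (X k \<omega>) ^ (k - j - 1)"
    have pw: "g (X k \<omega>) = (1 / j) * (?f1 \<omega> - F c ^ j * ?f2 \<omega>)" for \<omega>
    proof -
      have "F (X k \<omega>) ^ (k - j - 1) * F (X k \<omega>) ^ j = F (X k \<omega>) ^ (k - 1)"
        using jk by (simp add: power_add[symmetric])
      then show ?thesis unfolding g_def by (simp add: field_simps indicator_def)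
    qed
    have i1: "integrable M ?f1"
      by (rule bounded_integrable[where B=1], measurable, use Ffacts in \<open>auto simp: indicator_def intro!: power_le_one\<close>)
    have i2: "integrable M ?f2"
      by (rule bounded_integrable[where B=1], measurable, use Ffacts in \<open>auto simp: indicator_def intro!: power_le_one\<close>)
    have e1: "(\<integral>\<omega>. ?f1 \<omega> \<partial>M) = (r ^ Suc (k - 1) - F c ^ Suc (k - 1)) / Suc (k - 1)"
      by (rule int_power[OF I'm lo hi]) (use Ffacts r1 pr in auto)
    have e2: "(\<integral>\<omega>. ?f2 \<omega> \<partial>M) = (r ^ Suc (k - j - 1) - F c ^ Suc (k - j - 1)) / Suc (k - j - 1)"
      by (rule int_power[OF I'm lo hi]) (use Ffacts r1 pr in auto)
    have s1: "Suc (k - 1) = k" "Suc (k - j - 1) = k - j" using jk by auto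
    have "(\<integral>\<omega>. g (X k \<omega>) \<partial>M) = (\<integral>\<omega>. (1 / j) * (?f1 \<omega> - F c ^ j * ?f2 \<omega>) \<partial>M)"
      using pw by simp
    also have "\<dots> = (1 / j) * ((\<integral>\<omega>. ?f1 \<omega> \<partial>M) - F c ^ j * (\<integral>\<omega>. ?f2 \<omega> \<partial>M))"
      using i1 i2 by simp
    also have "\<dots> = (1 / real j) * ((r ^ k - F c ^ k) / real k - F c ^ j * (r ^ (k - j) - F c ^ (k - j)) / real (k - j))"
      unfolding e1 e2 s1 using jk by (simp add: of_nat_diff)
    finally show ?thesis .
  qed
  have D: "(\<integral>\<omega>. (\<lambda>f. g (f k)) (\<lambda>i\<in>{k}. X i \<omega>) \<partial>M) = (\<integral>\<omega>. g (X k \<omega>) \<partial>M)" by simp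
  show ?thesis unfolding B[symmetric] A D C ..
qed

end

lemma ev_jk:
  assumes jn: "(\<lambda>n. real (j n) / real n) \<longlonglongrightarrow> l1" and l1: "l1 > 0"
    and kn: "(\<lambda>n. real (k n) / real n) \<longlonglongrightarrow> l2" and l12: "l2 > l1"
  shows "eventually (\<lambda>n. 0 < n \<and> 1 \<le> j n \<and> j n < k n) sequentially"
proof -
  have d: "(\<lambda>n. real (k n) / real n - real (j n) / real n) \<longlonglongrightarrow> l2 - l1"
    using kn jn by (rule tendsto_diff)
  then have "eventually (\<lambda>n. real (k n) / real n - real (j n) / real n > 0) sequentially"
    using l12 order_tendstoD(1)[OF d, of 0] by simp
  then have evjk: "eventually (\<lambda>n. j n < k n) sequentially"
    by eventually_elim (simp add: diff_divide_distrib[symmetric] divide_less_cancel zero_less_divide_iff)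
  have evj: "eventually (\<lambda>n. j n > 0) sequentially"
  proof -
    have "eventually (\<lambda>n. real (j n) / real n > 0) sequentially"
      using jn l1 by (simp add: order_tendsto_iff)
    then show ?thesis by eventually_elim (auto simp: zero_less_divide_iff)
  qed
  show ?thesis using evj evjk eventually_gt_at_top[of 0]
    by eventually_elim auto
qed

theorem mainTheorem11:
  fixes M :: "'a measure" and X :: "nat \<Rightarrow> 'a \<Rightarrow> real" and F G :: "real \<Rightarrow> real"
    and a b :: "nat \<Rightarrow> real" and j k :: "nat \<Rightarrow> nat" and lam1 lam2 u y :: real
  assumes "prob_space M"
    and "\<And>i. X i \<in> borel_measurable M"
    and "prob_space.indep_vars M (\<lambda>_. borel) X UNIV"
    and "\<And>i x. measure M {\<omega> \<in> space M. X i \<omega> \<le> x} = F x"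
    and "continuous_on UNIV F"
    and "in_doa F G a b"
    and "(\<lambda>n. real (j n) / real n) \<longlonglongrightarrow> lam1" and "lam1 > 0"
    and "(\<lambda>n. real (k n) / real n) \<longlonglongrightarrow> lam2" and "lam2 > lam1"
    and "u < y" and "G u < 1"
  shows "(\<lambda>n. measure M {\<omega> \<in> space M. (X (k n) \<omega> - b n) / a n \<le> y \<and>
                 (X (j n) \<omega> - b n) / a n > u \<and> is_record X (j n) \<omega> \<and> is_record X (k n) \<omega>}
             / measure M {\<omega> \<in> space M. (X (j n) \<omega> - b n) / a n > u \<and>
                 is_record X (j n) \<omega> \<and> is_record X (k n) \<omega>})
    \<longlonglongrightarrow>
      (let \<beta>\<^sub>1 = lam1 / (lam2 - lam1); \<beta>\<^sub>2 = lam2 / (lam2 - lam1) in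
       (G y powr lam2 - G u powr lam1 *
          (\<beta>\<^sub>2 * G y powr (lam2 - lam1) - \<beta>\<^sub>1 * G u powr (lam2 - lam1)))
       / (\<beta>\<^sub>2 * (1 - G u powr lam1) - \<beta>\<^sub>1 * (1 - G u powr lam2)))"
proof -
  interpret P: prob_space M by (rule assms(1))
  interpret I: iid_setup M X F by unfold_locales (use assms(2-5) in auto)
  from assms(6) have apos: "\<And>n. a n > 0" and Gl: "\<And>x. (\<lambda>n. F (a n * x + b n) ^ n) \<longlonglongrightarrow> G x"
    unfolding in_doa_def by auto
  define c where "c n = a n * u + b n" for n
  define d where "d n = a n * y + b n" for n
  define p where "p n = F (c n)" for n
  define q where "q n = F (d n)" for n
  note Ff = I.Ffacts
  have p0: "\<And>n. 0 \<le> p n" and q0: "\<And>n. 0 \<le> q n" using Ff by (auto simp: p_def q_def)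
  have pn: "(\<lambda>n. p n ^ n) \<longlonglongrightarrow> G u" using Gl[of u] by (simp add: p_def c_def)
  have qn: "(\<lambda>n. q n ^ n) \<longlonglongrightarrow> G y" using Gl[of y] by (simp add: q_def d_def)
  have Gu0: "0 \<le> G u"
    by (rule LIMSEQ_le_const[OF pn]) (use p0 in auto)
  have one: "(\<lambda>n. (\<lambda>_. 1::real) n ^ n) \<longlonglongrightarrow> 1" by simp
  have Nl: "(\<lambda>n. real n ^ 2 * Nf (p n) (q n) (j n) (k n)) \<longlonglongrightarrow>
     (G y powr lam2 - G u powr lam2) / (lam1 * lam2) - G u powr lam1 * (G y powr (lam2 - lam1) - G u powr (lam2 - lam1)) / (lam1 * (lam2 - lam1))"
    by (rule Nf_limit[OF p0 q0 pn qn assms(7,8,9,10)])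
  have Dl: "(\<lambda>n. real n ^ 2 * Nf (p n) 1 (j n) (k n)) \<longlonglongrightarrow>
     (1 powr lam2 - G u powr lam2) / (lam1 * lam2) - G u powr lam1 * (1 powr (lam2 - lam1) - G u powr (lam2 - lam1)) / (lam1 * (lam2 - lam1))"
    using Nf_limit[OF p0 _ pn one assms(7,8,9,10)] by simp
  have Dpos: "(1 powr lam2 - G u powr lam2) / (lam1 * lam2) - G u powr lam1 * (1 powr (lam2 - lam1) - G u powr (lam2 - lam1)) / (lam1 * (lam2 - lam1)) > 0"
    by (rule LD_pos[OF Gu0 assms(12,8,10)])
  have R: "(\<lambda>n. (real n ^ 2 * Nf (p n) (q n) (j n) (k n)) / (real n ^ 2 * Nf (p n) 1 (j n) (k n))) \<longlonglongrightarrow>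
     ((G y powr lam2 - G u powr lam2) / (lam1 * lam2) - G u powr lam1 * (G y powr (lam2 - lam1) - G u powr (lam2 - lam1)) / (lam1 * (lam2 - lam1)))
     / ((1 powr lam2 - G u powr lam2) / (lam1 * lam2) - G u powr lam1 * (1 powr (lam2 - lam1) - G u powr (lam2 - lam1)) / (lam1 * (lam2 - lam1)))"
    by (rule tendsto_divide[OF Nl Dl]) (use Dpos in simp)
  note R = R[unfolded final_value[OF assms(8,10)]]
  show ?thesis
  proof (rule Lim_transform_eventually[OF R])
    show "eventually (\<lambda>n. (real n ^ 2 * Nf (p n) (q n) (j n) (k n)) / (real n ^ 2 * Nf (p n) 1 (j n) (k n)) =
      measure M {\<omega> \<in> space M. (X (k n) \<omega> - b n) / a n \<le> y \<and>
                 (X (j n) \<omega> - b n) / a n > u \<and> is_record X (j n) \<omega> \<and> is_record X (k n) \<omega>}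
             / measure M {\<omega> \<in> space M. (X (j n) \<omega> - b n) / a n > u \<and>
                 is_record X (j n) \<omega> \<and> is_record X (k n) \<omega>}) sequentially"
      using ev_jk[OF assms(7,8,9,10)]
    proof eventually_elim
      case (elim n)
      have an: "a n > 0" by (rule apos)
      have cd: "c n \<le> d n" using an assms(11) by (simp add: c_def d_def)
      have e1: "{\<omega> \<in> space M. (X (k n) \<omega> - b n) / a n \<le> y \<and>
                 (X (j n) \<omega> - b n) / a n > u \<and> is_record X (j n) \<omega> \<and> is_record X (k n) \<omega>}
           = {\<omega>\<in>space M. c n < X (j n) \<omega> \<and> X (k n) \<omega> \<in> {..d n} \<and> is_record X (j n) \<omega> \<and> is_record X (k n) \<omega>}"
        using an by (auto simp: c_def d_def pos_divide_le_eq pos_less_divide_eq algebra_simps)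
      have e2: "{\<omega> \<in> space M. (X (j n) \<omega> - b n) / a n > u \<and>
                 is_record X (j n) \<omega> \<and> is_record X (k n) \<omega>}
           = {\<omega>\<in>space M. c n < X (j n) \<omega> \<and> X (k n) \<omega> \<in> UNIV \<and> is_record X (j n) \<omega> \<and> is_record X (k n) \<omega>}"
        using an by (auto simp: c_def pos_less_divide_eq algebra_simps)
      have N: "measure M {\<omega>\<in>space M. c n < X (j n) \<omega> \<and> X (k n) \<omega> \<in> {..d n} \<and> is_record X (j n) \<omega> \<and> is_record X (k n) \<omega>}
          = Nf (p n) (q n) (j n) (k n)"
        unfolding Nf_def p_def q_def
      proof (rule I.record_prob)
        show "{x. F (c n) < F x \<and> F x < F (d n)} \<subseteq> {x. c n < x \<and> x \<in> {..d n}}"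
        proof
          fix x assume "x \<in> {x. F (c n) < F x \<and> F x < F (d n)}"
          then have h: "F (c n) < F x" "F x < F (d n)" by auto
          have "c n < x"
          proof (rule ccontr)
            assume "\<not> c n < x"
            then have "F x \<le> F (c n)" using Ff(1) by (simp add: monoD)
            then show False using h by simp
          qed
          moreover have "x \<le> d n"
          proof (rule ccontr)
            assume "\<not> x \<le> d n"
            then have "F (d n) \<le> F x" using Ff(1) by (simp add: monoD)
            then show False using h by simp
          qed
          ultimately show "x \<in> {x. c n < x \<and> x \<in> {..d n}}" by simp
        qed
        show "{x. c n < x \<and> x \<in> {..d n}} \<subseteq> {x. F (c n) \<le> F x \<and> F x \<le> F (d n)}"
          using Ff(1) by (auto simp: mono_def)
        show "F (c n) \<le> F (d n)" using Ff(1) cd by (auto simp: mono_def)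
      qed (use elim Ff in auto)
      have D: "measure M {\<omega>\<in>space M. c n < X (j n) \<omega> \<and> X (k n) \<omega> \<in> UNIV \<and> is_record X (j n) \<omega> \<and> is_record X (k n) \<omega>}
          = Nf (p n) 1 (j n) (k n)"
        unfolding Nf_def p_def
      proof (rule I.record_prob)
        show "{x. F (c n) < F x \<and> F x < 1} \<subseteq> {x. c n < x \<and> x \<in> UNIV}"
          using Ff(1) by (auto simp: mono_def) (meson not_le)+
        show "{x. c n < x \<and> x \<in> UNIV} \<subseteq> {x. F (c n) \<le> F x \<and> F x \<le> 1}"
          using Ff by (auto simp: mono_def)
      qed (use elim Ff in auto)
      have "real n ^ 2 \<noteq> 0" using elim by simp
      then show ?case unfolding e1 e2 N D by simp
    qed
  qed
qed

end
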